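(* In the $q$-Onsager algebra $\mathcal O$, the elements $\xi_1=XY-YX$ and $\xi_2=X^2Y^2-Y^2X^2+(q^2+q^{-2})(YXYX-XYXY)$ commute if and only if $q^6\neq 1$.
   Context: Let $\mathbb F$ be a field and fix a nonzero $q\in\mathbb F$ with $q^4\neq 1$. Let $[3]_q=q^2+1+q^{-2}$. The $q$-Onsager algebra $\mathcal O$ is the associative $\mathbb F$-algebra with 1 defined by generators $X,Y$ and relations $X^3Y-[3]_q X^2YX+[3]_q XYX^2-YX^3 = -(q^2-q^{-2})^2(XY-YX)$ and $Y^3X-[3]_q Y^2XY+[3]_q YXY^2-XY^3 = -(q^2-q^{-2})^2(YX-XY)$. *)

theory Defs
  imports Main
begin

text \<open>The free associative algebra over a field 'a on generators X, Y:
  elements are finitely supported functions from words to coefficients.\<close>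

datatype gen = GX | GY

type_synonym 'a fa = "gen list \<Rightarrow> 'a"

definition fa_fin :: "'a::field fa \<Rightarrow> bool" where
  "fa_fin f \<longleftrightarrow> finite {w. f w \<noteq> 0}"

definition fa_zero :: "'a::field fa" where
  "fa_zero = (\<lambda>w. 0)"

definition fa_add :: "'a::field fa \<Rightarrow> 'a fa \<Rightarrow> 'a fa" where
  "fa_add f g = (\<lambda>w. f w + g w)"

definition fa_sub :: "'a::field fa \<Rightarrow> 'a fa \<Rightarrow> 'a fa" where
  "fa_sub f g = (\<lambda>w. f w - g w)"

definition fa_mul :: "'a::field fa \<Rightarrow> 'a fa \<Rightarrow> 'a fa" where
  "fa_mul f g = (\<lambda>w. \<Sum>(u, v) \<in> {(u, v). u @ v = w}. f u * g v)"

definition lc :: "('a::field \<times> gen list) list \<Rightarrow> 'a fa" where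
  "lc ps = (\<lambda>w. sum_list (map (\<lambda>(c, u). if u = w then c else 0) ps))"

inductive_set fa_ideal :: "'a::field fa set \<Rightarrow> 'a fa set" for R where
  gen: "r \<in> R \<Longrightarrow> r \<in> fa_ideal R"
| zero: "fa_zero \<in> fa_ideal R"
| add: "a \<in> fa_ideal R \<Longrightarrow> b \<in> fa_ideal R \<Longrightarrow> fa_add a b \<in> fa_ideal R"
| lmul: "fa_fin b \<Longrightarrow> a \<in> fa_ideal R \<Longrightarrow> fa_mul b a \<in> fa_ideal R"
| rmul: "fa_fin b \<Longrightarrow> a \<in> fa_ideal R \<Longrightarrow> fa_mul a b \<in> fa_ideal R"

definition qint3 :: "'a::field \<Rightarrow> 'a" where
  "qint3 q = q^2 + 1 + inverse (q^2)"

text \<open>The q-Onsager relations, written as (LHS - RHS).\<close>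
definition qons_rel1 :: "'a::field \<Rightarrow> 'a fa" where
  "qons_rel1 q = (let t = qint3 q; d = (q^2 - inverse (q^2))^2 in
     lc [(1, [GX,GX,GX,GY]), (-t, [GX,GX,GY,GX]), (t, [GX,GY,GX,GX]), (-1, [GY,GX,GX,GX]),
         (d, [GX,GY]), (-d, [GY,GX])])"

definition qons_rel2 :: "'a::field \<Rightarrow> 'a fa" where
  "qons_rel2 q = (let t = qint3 q; d = (q^2 - inverse (q^2))^2 in
     lc [(1, [GY,GY,GY,GX]), (-t, [GY,GY,GX,GY]), (t, [GY,GX,GY,GY]), (-1, [GX,GY,GY,GY]),
         (d, [GY,GX]), (-d, [GX,GY])])"

definition qons_ideal :: "'a::field \<Rightarrow> 'a fa set" where
  "qons_ideal q = fa_ideal {qons_rel1 q, qons_rel2 q}"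

text \<open>Two free-algebra elements commute in the q-Onsager algebra iff their
  commutator lies in the defining ideal.\<close>
definition qons_commute :: "'a::field \<Rightarrow> 'a fa \<Rightarrow> 'a fa \<Rightarrow> bool" where
  "qons_commute q a b \<longleftrightarrow> fa_sub (fa_mul a b) (fa_mul b a) \<in> qons_ideal q"

definition xi1 :: "'a::field fa" where
  "xi1 = lc [(1, [GX,GY]), (-1, [GY,GX])]"

definition xi2 :: "'a::field \<Rightarrow> 'a fa" where
  "xi2 q = (let s = q^2 + inverse (q^2) in
     lc [(1, [GX,GX,GY,GY]), (-1, [GY,GY,GX,GX]), (s, [GY,GX,GY,GX]), (-s, [GX,GY,GX,GY])])"

end

theory Submission imports Defs begin

definition lcmul :: "('a::field \<times> gen list) list \<Rightarrow> ('a \<times> gen list) list \<Rightarrow> ('a \<times> gen list) list" where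
  "lcmul ps qs = concat (map (\<lambda>(c,u). map (\<lambda>(d,v). (c*d, u@v)) qs) ps)"

lemma lc_Nil[simp]: "lc [] w = 0" by (simp add: lc_def)
lemma lc_Cons: "lc ((c,u)#ps) w = (if u = w then c else 0) + lc ps w" by (simp add: lc_def)
lemma lc_append: "lc (ps @ qs) w = lc ps w + lc qs w" by (simp add: lc_def)

lemma split_fin: "finite {(u, v). u @ v = (w::gen list)}"
proof -
  have "{(u, v). u @ v = w} \<subseteq> (\<lambda>i. (take i w, drop i w)) ` {0..length w}"
  proof
    fix x assume "x \<in> {(u, v). u @ v = w}"
    then obtain u v where x: "x = (u,v)" "u @ v = w" by auto
    then show "x \<in> (\<lambda>i. (take i w, drop i w)) ` {0..length w}"
      by (auto intro!: image_eqI[where x="length u"])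
  qed
  thus ?thesis by (rule finite_subset) auto
qed

lemma mul_single: "fa_mul (lc [(c,a)]) (lc [(d,b)]) = lc [(c*d, a@b)]"
proof
  fix w
  have "fa_mul (lc [(c,a)]) (lc [(d,b)]) w
     = (\<Sum>x\<in>{(u, v). u @ v = w}. if x = (a,b) then c*d else 0)"
    unfolding fa_mul_def by (rule sum.cong) (auto simp: lc_def split: if_splits)
  also have "\<dots> = (if a @ b = w then c*d else 0)"
    using split_fin[of w] by (simp add: sum.delta')
  finally show "fa_mul (lc [(c,a)]) (lc [(d,b)]) w = lc [(c*d, a@b)] w"
    by (simp add: lc_def)
qed

lemma fa_mul_add_left: "fa_mul (\<lambda>w. f w + g w) h = (\<lambda>w. fa_mul f h w + fa_mul g h w)"
  unfolding fa_mul_def by (auto simp: ring_distribs sum.distrib case_prod_beta)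
lemma fa_mul_add_right: "fa_mul h (\<lambda>w. f w + g w) = (\<lambda>w. fa_mul h f w + fa_mul h g w)"
  unfolding fa_mul_def by (auto simp: ring_distribs sum.distrib case_prod_beta)
lemma fa_mul_zero_left: "fa_mul (lc []) h = lc []"
  unfolding fa_mul_def by (auto simp: lc_def)
lemma fa_mul_zero_right: "fa_mul h (lc []) = lc []"
  unfolding fa_mul_def by (auto simp: lc_def)

lemma lc_Cons_fun: "lc ((c,u)#ps) = (\<lambda>w. lc [(c,u)] w + lc ps w)"
  by (rule ext) (simp add: lc_Cons)
lemma lc_append_fun: "lc (ps@qs) = (\<lambda>w. lc ps w + lc qs w)"
  by (rule ext) (simp add: lc_append)

lemma mul_single_left: "fa_mul (lc [(c,a)]) (lc qs) = lc (lcmul [(c,a)] qs)"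
proof (induction qs)
  case Nil show ?case unfolding lcmul_def fa_mul_def lc_def by simp
next
  case (Cons p qs)
  obtain d b where p: "p = (d,b)" by (cases p)
  have "fa_mul (lc [(c,a)]) (lc (p#qs)) = (\<lambda>w. fa_mul (lc [(c,a)]) (lc [p]) w + fa_mul (lc [(c,a)]) (lc qs) w)"
    unfolding p lc_Cons_fun[of d b qs] by (rule fa_mul_add_right)
  also have "\<dots> = (\<lambda>w. lc [(c*d,a@b)] w + lc (lcmul [(c,a)] qs) w)"
    by (simp only: Cons p mul_single)
  also have "\<dots> = lc (lcmul [(c,a)] (p#qs))"
    by (rule ext) (simp add: lcmul_def p lc_Cons)
  finally show ?case .
qed

lemma fa_mul_lc: "fa_mul (lc ps) (lc qs) = lc (lcmul ps qs)"
proof (induction ps)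
  case Nil show ?case unfolding lcmul_def fa_mul_def lc_def by simp
next
  case (Cons p ps)
  obtain c a where p: "p = (c,a)" by (cases p)
  have "fa_mul (lc (p#ps)) (lc qs) = (\<lambda>w. fa_mul (lc [p]) (lc qs) w + fa_mul (lc ps) (lc qs) w)"
    unfolding p lc_Cons_fun[of c a ps] by (rule fa_mul_add_left)
  also have "\<dots> = (\<lambda>w. lc (lcmul [p] qs) w + lc (lcmul ps qs) w)"
    by (simp only: Cons p mul_single_left)
  also have "\<dots> = lc (lcmul (p#ps) qs)"
    by (rule ext) (simp add: lcmul_def p lc_append)
  finally show ?case .
qed

lemma fa_add_lc: "fa_add (lc ps) (lc qs) = lc (ps @ qs)"
  by (simp add: fa_add_def lc_append_fun)

definition lcneg :: "('a::field \<times> gen list) list \<Rightarrow> ('a \<times> gen list) list" where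
  "lcneg ps = map (\<lambda>(c,u). (-c,u)) ps"

lemma lc_neg: "lc (lcneg ps) w = - lc ps w"
  by (induction ps) (auto simp: lcneg_def lc_def)

lemma fa_sub_lc: "fa_sub (lc ps) (lc qs) = lc (ps @ lcneg qs)"
  by (rule ext) (simp add: fa_sub_def lc_append lc_neg)

lemma lc_fin: "fa_fin (lc ps)"
proof -
  have "{w. lc ps w \<noteq> 0} \<subseteq> set (map snd ps)"
  proof (induction ps)
    case Nil thus ?case by simp
  next
    case (Cons p ps) thus ?case by (cases p) (auto simp: lc_Cons split: if_splits)
  qed
  thus ?thesis unfolding fa_fin_def by (rule finite_subset) simp
qed

lemma fin_lc: assumes "fa_fin f" shows "\<exists>ps. f = lc ps"
proof -
  from assms obtain ws where ws: "set ws = {w. f w \<noteq> 0}" "distinct ws"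
    unfolding fa_fin_def using finite_distinct_list by blast
  have "lc (map (\<lambda>w. (f w, w)) ws) v = (if v \<in> set ws then f v else 0)" for v
    using ws(2) by (induction ws) (auto simp: lc_Cons)
  hence "f = lc (map (\<lambda>w. (f w, w)) ws)" using ws(1) by (auto intro!: ext)
  thus ?thesis by blast
qed

lemma lc_eqI: assumes "\<forall>w \<in> set (map snd (ps @ qs)). lc ps w = lc qs w" shows "lc ps = lc qs"
proof
  fix w
  have z: "w \<notin> set (map snd xs) \<Longrightarrow> lc xs w = 0" for xs :: "('a \<times> gen list) list"
    by (induction xs) (auto simp: lc_Cons)
  show "lc ps w = lc qs w"
    using assms z[of ps] z[of qs] by (cases "w \<in> set (map snd (ps @ qs))") auto
qed


definition R1 :: "'a::field \<Rightarrow> ('a \<times> gen list) list" where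
  "R1 s = [(1, [GX,GX,GX,GY]), (-(s+1), [GX,GX,GY,GX]), (s+1, [GX,GY,GX,GX]), (-1, [GY,GX,GX,GX]),
         (s*s-4, [GX,GY]), (-(s*s-4), [GY,GX])]"
definition R2 :: "'a::field \<Rightarrow> ('a \<times> gen list) list" where
  "R2 s = [(1, [GY,GY,GY,GX]), (-(s+1), [GY,GY,GX,GY]), (s+1, [GY,GX,GY,GY]), (-1, [GX,GY,GY,GY]),
         (s*s-4, [GY,GX]), (-(s*s-4), [GX,GY])]"
definition X1 :: "('a::field \<times> gen list) list" where
  "X1 = [(1, [GX,GY]), (-1, [GY,GX])]"
definition X2 :: "'a::field \<Rightarrow> ('a \<times> gen list) list" where
  "X2 s = [(1, [GX,GX,GY,GY]), (-1, [GY,GY,GX,GX]), (s, [GY,GX,GY,GX]), (-s, [GX,GY,GX,GY])]"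

definition Kexpr :: "'a::field \<Rightarrow> 'a fa" where
 "Kexpr s = fa_add (fa_mul (lc [(s*s-4,[])]) (lc (R1 s)))
   (fa_add (fa_mul (lc [(s*s-4,[])]) (lc (R2 s)))
   (fa_add (fa_mul (lc (R2 s)) (lc [(1,[GX,GX])]))
   (fa_add (fa_mul (lc [(1,[GX,GX])]) (lc (R2 s)))
   (fa_add (fa_mul (lc [(-s,[GX])]) (fa_mul (lc (R2 s)) (lc [(1,[GX])])))
   (fa_add (fa_mul (lc (R1 s)) (lc [(1,[GY,GY])]))
   (fa_add (fa_mul (lc [(1,[GY,GY])]) (lc (R1 s)))
   (fa_mul (lc [(-s,[GY])]) (fa_mul (lc (R1 s)) (lc [(1,[GY])])))))))))"

lemma key_identity:
  "fa_mul (lc [(s+1,[])]) (fa_sub (fa_mul (lc X1) (lc (X2 s))) (fa_mul (lc (X2 s)) (lc X1))) = Kexpr (s::'a::field)"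
  unfolding Kexpr_def fa_sub_lc fa_mul_lc fa_add_lc
  apply (rule lc_eqI)
  apply (simp add: R1_def R2_def X1_def X2_def lcmul_def lcneg_def lc_def)
  apply (simp add: algebra_simps)
  done


type_synonym 'a mat = "nat \<Rightarrow> nat \<Rightarrow> 'a"

definition mmul :: "'a::field mat \<Rightarrow> 'a mat \<Rightarrow> 'a mat" where
  "mmul A B = (\<lambda>i j. \<Sum>k<3. A i k * B k j)"

lemma sum3: "(\<Sum>k<(3::nat). f k) = f 0 + f 1 + (f 2 :: 'a::comm_monoid_add)"
  by (simp add: eval_nat_numeral)

definition Xm :: "'a::field mat" where
  "Xm i j = (if i = 0 \<and> j = 0 then 2 else if i = 0 \<and> j = 1 then -1 else if i = 1 \<and> j = 1 then -1
             else if i = 2 \<and> j = 2 then 2 else 0)"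
definition Ym :: "'a::field mat" where
  "Ym i j = (if i = 0 \<and> j = 0 then 2 else if i = 1 \<and> j = 1 then -1 else if i = 1 \<and> j = 2 then -1
             else if i = 2 \<and> j = 2 then -1 else 0)"

fun gm :: "gen \<Rightarrow> 'a::field mat" where
  "gm GX = Xm" | "gm GY = Ym"

fun ev :: "gen list \<Rightarrow> 'a::field mat" where
  "ev [] = (\<lambda>i j. if i = j then 1 else 0)"
| "ev (g#w) = mmul (gm g) (ev w)"

lemma mmul_assoc: "mmul A (mmul B C) = mmul (mmul A B) C"
  unfolding mmul_def by (auto intro!: ext simp: sum_distrib_left sum_distrib_right mult.assoc intro: sum.swap)

lemma ev_append: "i < 3 \<Longrightarrow> (ev (u @ v) i j :: 'a::field) = mmul (ev u) (ev v) i j"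
proof (induction u arbitrary: i)
  case Nil
  have "mmul (ev []) (ev v) i j = (\<Sum>k<3. (if i = k then 1 else 0) * (ev v k j :: 'a))" by (simp add: mmul_def)
  also have "\<dots> = (\<Sum>k<3. if i = k then ev v k j else 0)" by (intro sum.cong) auto
  also have "\<dots> = ev v i j" using Nil by (simp add: sum.delta)
  finally show ?case by (metis append_Nil)
next
  case (Cons g u)
  have "(ev ((g#u) @ v) i j :: 'a) = (\<Sum>k<3. gm g i k * ev (u@v) k j)" by (simp add: mmul_def)
  also have "\<dots> = (\<Sum>k<3. gm g i k * mmul (ev u) (ev v) k j)"
  proof (rule sum.cong[OF refl])
    fix k assume "k \<in> {..<(3::nat)}"
    hence "(ev (u @ v) k j :: 'a) = mmul (ev u) (ev v) k j" using Cons.IH[of k] by simp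
    thus "gm g i k * (ev (u @ v) k j :: 'a) = gm g i k * mmul (ev u) (ev v) k j" by simp
  qed
  also have "\<dots> = mmul (mmul (gm g) (ev u)) (ev v) i j"
    by (subst mmul_assoc[symmetric]) (simp add: mmul_def)
  finally show ?case by simp
qed

definition evl :: "('a::field \<times> gen list) list \<Rightarrow> 'a mat" where
  "evl ps = (\<lambda>i j. sum_list (map (\<lambda>(c,u). c * ev u i j) ps))"

lemma evl_Nil[simp]: "evl [] i j = 0" by (simp add: evl_def)
lemma evl_Cons: "evl ((c,u)#ps) i j = c * ev u i j + evl ps i j" by (simp add: evl_def)
lemma evl_append: "evl (ps @ qs) i j = evl ps i j + evl qs i j" by (simp add: evl_def)
lemma evl_neg: "evl (lcneg ps) i j = - evl ps i j"
  by (induction ps) (auto simp: evl_def lcneg_def)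

lemma evl_single_mul: "i < 3 \<Longrightarrow> evl (lcmul [(c,a)] qs) i j = mmul (evl [(c,a)]) (evl qs) i j"
proof (induction qs)
  case Nil thus ?case by (simp add: lcmul_def mmul_def)
next
  case (Cons p qs)
  obtain d b where p: "p = (d,b)" by (cases p)
  have "evl (lcmul [(c,a)] (p#qs)) i j = c * d * ev (a@b) i j + evl (lcmul [(c,a)] qs) i j"
    by (simp add: lcmul_def p evl_def)
  also have "\<dots> = c * d * mmul (ev a) (ev b) i j + mmul (evl [(c,a)]) (evl qs) i j"
    using Cons by (simp add: ev_append)
  also have "\<dots> = mmul (evl [(c,a)]) (evl (p#qs)) i j"
    by (simp add: mmul_def p evl_Cons sum_distrib_left sum.distrib ring_distribs mult_ac)
  finally show ?case .
qed

lemma evl_mul: "i < 3 \<Longrightarrow> evl (lcmul ps qs) i j = mmul (evl ps) (evl qs) i j"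
proof (induction ps)
  case Nil thus ?case by (simp add: lcmul_def mmul_def)
next
  case (Cons p ps)
  obtain c a where p: "p = (c,a)" by (cases p)
  have "evl (lcmul (p#ps) qs) i j = evl (lcmul [p] qs) i j + evl (lcmul ps qs) i j"
    by (simp add: lcmul_def evl_append)
  also have "\<dots> = mmul (evl [p]) (evl qs) i j + mmul (evl ps) (evl qs) i j"
    using Cons by (simp add: p evl_single_mul)
  also have "\<dots> = mmul (evl (p#ps)) (evl qs) i j"
    by (simp add: mmul_def p evl_Cons sum.distrib ring_distribs)
  finally show ?case .
qed

lemma evl_sum: "finite S \<Longrightarrow> set (map snd ps) \<subseteq> S \<Longrightarrow> evl ps i j = (\<Sum>w\<in>S. lc ps w * ev w i j)"
proof (induction ps)
  case Nil thus ?case by simp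
next
  case (Cons p ps)
  obtain c u where p: "p = (c,u)" by (cases p)
  have uS: "u \<in> S" using Cons.prems p by auto
  have "(\<Sum>w\<in>S. lc (p#ps) w * ev w i j) = (\<Sum>w\<in>S. (if u = w then c * ev w i j else 0)) + (\<Sum>w\<in>S. lc ps w * ev w i j)"
    unfolding sum.distrib[symmetric] by (intro sum.cong) (auto simp: p lc_Cons ring_distribs)
  also have "\<dots> = c * ev u i j + evl ps i j"
    using Cons uS by (simp add: sum.delta)
  finally show ?case by (simp add: p evl_Cons)
qed

lemma evl_welldef: assumes "lc ps = lc qs" shows "evl ps i j = evl qs i j"
proof -
  let ?S = "set (map snd ps) \<union> set (map snd qs)"
  have "evl ps i j = (\<Sum>w\<in>?S. lc ps w * ev w i j)" by (rule evl_sum) auto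
  also have "\<dots> = (\<Sum>w\<in>?S. lc qs w * ev w i j)" using assms by simp
  also have "\<dots> = evl qs i j" by (rule evl_sum[symmetric]) auto
  finally show ?thesis .
qed

definition killed :: "'a::field fa \<Rightarrow> bool" where
  "killed f \<longleftrightarrow> (\<exists>ps. f = lc ps \<and> (\<forall>i<3. \<forall>j<3. evl ps i j = 0))"

lemma ideal_killed: assumes "f \<in> fa_ideal R" and "\<forall>r\<in>R. killed r" shows "killed f"
  using assms(1)
proof induction
  case (gen r) thus ?case using assms(2) by blast
next
  case zero
  have "fa_zero = lc []" by (auto simp: fa_zero_def lc_def)
  thus ?case unfolding killed_def by (intro exI[of _ "[]"]) auto
next
  case (add a b)
  then obtain ps qs where "a = lc ps" "\<forall>i<3. \<forall>j<3. evl ps i j = 0" "b = lc qs" "\<forall>i<3. \<forall>j<3. evl qs i j = 0"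
    unfolding killed_def by blast
  thus ?case unfolding killed_def by (intro exI[of _ "ps @ qs"]) (simp add: fa_add_lc evl_append)
next
  case (lmul b a)
  then obtain ps where ps: "a = lc ps" "\<forall>i<3. \<forall>j<3. evl ps i j = 0" unfolding killed_def by blast
  obtain bs where bs: "b = lc bs" using fin_lc lmul.hyps(1) by blast
  show ?case unfolding killed_def
  proof (intro exI[of _ "lcmul bs ps"] conjI allI impI)
    show "fa_mul b a = lc (lcmul bs ps)" by (simp add: ps bs fa_mul_lc)
    fix i j :: nat assume "i < 3" "j < 3"
    thus "evl (lcmul bs ps) i j = 0" using ps(2) by (simp add: evl_mul mmul_def)
  qed
next
  case (rmul b a)
  then obtain ps where ps: "a = lc ps" "\<forall>i<3. \<forall>j<3. evl ps i j = 0" unfolding killed_def by blast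
  obtain bs where bs: "b = lc bs" using fin_lc rmul.hyps(1) by blast
  show ?case unfolding killed_def
  proof (intro exI[of _ "lcmul ps bs"] conjI allI impI)
    show "fa_mul a b = lc (lcmul ps bs)" by (simp add: ps bs fa_mul_lc)
    fix i j :: nat assume "i < 3" "j < 3"
    thus "evl (lcmul ps bs) i j = 0" using ps(2) by (simp add: evl_mul mmul_def)
  qed
qed

lemma lt3: "(i::nat) < 3 \<Longrightarrow> i = 0 \<or> i = 1 \<or> i = 2" by auto

lemma R1_killed: "killed (lc (R1 (-1::'a::field)))"
  unfolding killed_def
proof (intro exI[of _ "R1 (-1)"] conjI allI impI refl)
  fix i j :: nat assume "i < 3" "j < 3"
  thus "evl (R1 (-1::'a)) i j = 0"
    by (auto dest!: lt3 simp: R1_def evl_def mmul_def sum3 Xm_def Ym_def)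
qed

lemma R2_killed: "killed (lc (R2 (-1::'a::field)))"
  unfolding killed_def
proof (intro exI[of _ "R2 (-1)"] conjI allI impI refl)
  fix i j :: nat assume "i < 3" "j < 3"
  thus "evl (R2 (-1::'a)) i j = 0"
    by (auto dest!: lt3 simp: R2_def evl_def mmul_def sum3 Xm_def Ym_def)
qed

lemma comm_val: "evl (lcmul X1 (X2 (-1)) @ lcneg (lcmul (X2 (-1)) X1)) 0 2 = (-81 :: 'a::field)"
  apply (simp only: evl_append evl_neg evl_mul[of 0] zero_less_numeral)
  apply (simp add: mmul_def sum3 X1_def X2_def evl_def Xm_def Ym_def)
  done


lemma lc_scal: "lc (lcmul [(a,[])] L) w = a * lc L w"
  by (induction L) (auto simp: lcmul_def lc_Cons ring_distribs)

lemma Kexpr_ideal: "Kexpr s \<in> fa_ideal {lc (R1 s), lc (R2 s)}"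
proof -
  have g1: "lc (R1 s) \<in> fa_ideal {lc (R1 s), lc (R2 s)}" by (rule fa_ideal.gen) simp
  have g2: "lc (R2 s) \<in> fa_ideal {lc (R1 s), lc (R2 s)}" by (rule fa_ideal.gen) simp
  note I = fa_ideal.add fa_ideal.lmul[OF lc_fin] fa_ideal.rmul[OF lc_fin]
  show ?thesis unfolding Kexpr_def
    by (intro I g1 g2)
qed

theorem proposition9p4:
  fixes q :: "'a::field"
  assumes "q \<noteq> 0" and "q ^ 4 \<noteq> 1"
  shows "qons_commute q xi1 (xi2 q) \<longleftrightarrow> q ^ 6 \<noteq> 1"
proof -
  define s where "s = q^2 + inverse (q^2)"
  have qi: "q^2 * inverse (q^2) = 1" using assms(1) by simp
  have d: "(q^2 - inverse (q^2))^2 = s*s - 4"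
  proof -
    have "(q^2 - inverse (q^2))^2 = (q^2)^2 - 2 * (q^2 * inverse (q^2)) + (inverse (q^2))^2"
      by (simp add: power2_eq_square algebra_simps)
    also have "\<dots> = (q^2 + inverse (q^2))^2 - 4 * (q^2 * inverse (q^2))"
      by (simp add: power2_eq_square algebra_simps)
    finally show ?thesis using qi by (simp add: s_def power2_eq_square)
  qed
  have t: "qint3 q = s + 1" by (simp add: qint3_def s_def)
  have r1: "qons_rel1 q = lc (R1 s)" unfolding qons_rel1_def Let_def t d R1_def by simp
  have r2: "qons_rel2 q = lc (R2 s)" unfolding qons_rel2_def Let_def t d R2_def by simp
  have x1: "xi1 = lc X1" by (simp add: xi1_def X1_def)
  have x2: "xi2 q = lc (X2 s)" by (simp add: xi2_def X2_def s_def Let_def)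
  define T where "T = fa_sub (fa_mul (lc X1) (lc (X2 s))) (fa_mul (lc (X2 s)) (lc X1))"
  define Tl where "Tl = lcmul X1 (X2 s) @ lcneg (lcmul (X2 s) X1)"
  have TTl: "T = lc Tl" unfolding T_def Tl_def by (simp add: fa_mul_lc fa_sub_lc)
  have comm: "qons_commute q xi1 (xi2 q) \<longleftrightarrow> T \<in> fa_ideal {lc (R1 s), lc (R2 s)}"
    unfolding qons_commute_def qons_ideal_def r1 r2 x1 x2 T_def ..
  define p where "p = q^2"
  have p1: "p \<noteq> 1"
  proof
    assume "p = 1"
    hence "(q^2)^2 = 1" by (simp add: p_def)
    hence "q^4 = 1" by (simp add: power_mult[symmetric])
    thus False using assms(2) by simp
  qed
  have p0: "p \<noteq> 0" using assms(1) by (simp add: p_def)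
  have ps: "p * s = p^2 + 1" using qi by (simp add: s_def p_def power2_eq_square algebra_simps)
  have q6: "q^6 = p^3" by (simp add: p_def power_mult[symmetric])
  show ?thesis
  proof
    assume c: "qons_commute q xi1 (xi2 q)"
    show "q^6 \<noteq> 1"
    proof
      assume "q^6 = 1"
      hence "p^3 = 1" using q6 by simp
      hence "(p - 1) * (p^2 + p + 1) = 0" by (simp add: algebra_simps power2_eq_square power3_eq_cube)
      hence pp: "p^2 + p + 1 = 0" using p1 by simp
      have "p * s - p * (-1) = p^2 + p + 1" using ps by (simp add: algebra_simps)
      hence "p * s + p = 0" using pp by simp
      hence "p * s = p * (-1)" by (simp add: eq_neg_iff_add_eq_0)
      hence sm: "s = -1" using p0 by (metis mult_left_cancel)
      have "T \<in> fa_ideal {lc (R1 s), lc (R2 s)}" using c comm by simp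
      hence "killed T" by (rule ideal_killed) (auto simp: sm R1_killed R2_killed)
      then obtain ks where ks: "T = lc ks" "\<forall>i<3. \<forall>j<3. evl ks i j = 0" unfolding killed_def by blast
      have "evl Tl 0 2 = evl ks 0 2" using ks(1) TTl by (intro evl_welldef) simp
      hence "evl Tl 0 2 = 0" using ks(2) by simp
      moreover have "evl Tl 0 2 = (-81::'a)" unfolding Tl_def sm by (rule comm_val)
      ultimately have "(81::'a) = 0" by simp
      moreover have "(3::'a)^4 = 81" by simp
      ultimately have "(3::'a)^4 = 0" by simp
      hence three: "(3::'a) = 0" by (simp only: power_eq_0_iff)
      have "(p - 1)^2 = p^2 + p + 1 - 3 * p" by (simp add: algebra_simps power2_eq_square)
      hence "(p - 1)^2 = 0" using pp three by simp
      thus False using p1 by simp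
    qed
  next
    assume n6: "q^6 \<noteq> 1"
    have "s + 1 \<noteq> 0"
    proof
      assume "s + 1 = 0"
      moreover have "p * s + p = p * (s + 1)" by (simp add: algebra_simps)
      ultimately have "p * s + p = 0" by simp
      hence "p^2 + p + 1 = 0" using ps by (simp add: algebra_simps)
      hence "(p - 1) * (p^2 + p + 1) = 0" by simp
      hence "p^3 = 1" by (simp add: algebra_simps power2_eq_square power3_eq_cube)
      thus False using n6 q6 by simp
    qed
    have K: "fa_mul (lc [(s+1,[])]) T = Kexpr s" unfolding T_def by (rule key_identity)
    have "T = fa_mul (lc [(inverse (s+1),[])]) (fa_mul (lc [(s+1,[])]) T)"
      using \<open>s + 1 \<noteq> 0\<close> by (auto intro!: ext simp: TTl fa_mul_lc lc_scal)
    hence "T = fa_mul (lc [(inverse (s+1),[])]) (Kexpr s)" using K by simp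
    hence "T \<in> fa_ideal {lc (R1 s), lc (R2 s)}"
      using fa_ideal.lmul[OF lc_fin Kexpr_ideal] by simp
    thus "qons_commute q xi1 (xi2 q)" using comm by simp
  qed
qed

end
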